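(* Let $(X,d)$ be a metric space and $\emptyset\neq A\subseteq X$. (i) If $\alpha:\mathbb{N}\to\mathbb{N}$ is a I-modulus of total boundedness for $A$, then $\gamma(k):=\alpha(2k+1)+1$ is a II-modulus of total boundedness for $A$. (ii) If $\gamma:\mathbb{N}\to\mathbb{N}$ is a II-modulus of total boundedness for $A$, then $\alpha(k):=\gamma(k)-1$ is a I-modulus of total boundedness for $A$ (in particular, $A$ is totally bounded).
   Context: $\mathbb{N}$ includes $0$. A map $\alpha:\mathbb{N}\to\mathbb{N}$ is a I-modulus of total boundedness for $A$ if for every $k\in\mathbb{N}$ there exist $a_0,\dots,a_{\alpha(k)}\in X$ such that for every $x\in A$ there is $0\le i\le\alpha(k)$ with $d(x,a_i)\le \frac1{k+1}$. A map $\gamma:\mathbb{N}\to\mathbb{N}$ is a II-modulus of total boundedness for $A$ if for every $k\in\mathbb{N}$ and every sequence $(x_n)$ in $A$ there exist $0\le i<j\le\gamma(k)$ with $d(x_i,x_j)\le\frac1{k+1}$. *)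

theory Defs
  imports "HOL-Analysis.Analysis"
begin

definition I_modulus :: "'a::metric_space set \<Rightarrow> (nat \<Rightarrow> nat) \<Rightarrow> bool" where
  "I_modulus A \<alpha> \<longleftrightarrow>
     (\<forall>k. \<exists>a::nat \<Rightarrow> 'a. \<forall>x\<in>A. \<exists>i\<le>\<alpha> k. dist x (a i) \<le> 1 / (real k + 1))"

definition II_modulus :: "'a::metric_space set \<Rightarrow> (nat \<Rightarrow> nat) \<Rightarrow> bool" where
  "II_modulus A \<gamma> \<longleftrightarrow>
     (\<forall>k. \<forall>x::nat \<Rightarrow> 'a. (\<forall>n. x n \<in> A) \<longrightarrow>
        (\<exists>i j. i < j \<and> j \<le> \<gamma> k \<and> dist (x i) (x j) \<le> 1 / (real k + 1)))"

end

theory Submission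
  imports Defs
begin

lemma part1:
  fixes A :: "'a::metric_space set"
  assumes "I_modulus A \<alpha>"
  shows "II_modulus A (\<lambda>k. \<alpha> (2 * k + 1) + 1)"
  unfolding II_modulus_def
proof (intro allI impI)
  fix k and x :: "nat \<Rightarrow> 'a" assume xA: "\<forall>n. x n \<in> A"
  define N where "N = \<alpha> (2*k+1)"
  define r where "r = 1 / (real (2*k+1) + 1)"
  obtain a where a: "\<forall>y\<in>A. \<exists>i\<le>N. dist y (a i) \<le> r"
    using assms unfolding I_modulus_def N_def r_def by blast
  define f where "f n = (SOME i. i \<le> N \<and> dist (x n) (a i) \<le> r)" for n
  have f: "f n \<le> N \<and> dist (x n) (a (f n)) \<le> r" for n
    unfolding f_def by (rule someI_ex) (use a xA in blast)
  have "\<not> inj_on f {..N+1}"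
  proof
    assume "inj_on f {..N+1}"
    hence "card (f ` {..N+1}) = N + 2" by (simp add: card_image)
    moreover have "f ` {..N+1} \<subseteq> {..N}" using f by auto
    hence "card (f ` {..N+1}) \<le> card {..N}" by (intro card_mono) auto
    hence "card (f ` {..N+1}) \<le> N + 1" by simp
    ultimately show False by simp
  qed
  then obtain i j where ij: "i \<le> N+1" "j \<le> N+1" "i \<noteq> j" "f i = f j"
    unfolding inj_on_def by auto
  have "dist (x i) (x j) \<le> dist (x i) (a (f i)) + dist (x j) (a (f i))"
    by (rule dist_triangle2)
  also have "\<dots> \<le> 2 * r" using f[of i] f[of j] ij(4) by simp
  also have "2 * r = 1 / (real k + 1)" unfolding r_def by (simp add: field_simps)
  finally have d: "dist (x i) (x j) \<le> 1 / (real k + 1)" .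
  show "\<exists>i j. i < j \<and> j \<le> \<alpha> (2 * k + 1) + 1 \<and> dist (x i) (x j) \<le> 1 / (real k + 1)"
  proof (cases "i < j")
    case True thus ?thesis using ij d N_def by auto
  next
    case False hence "j < i" using ij(3) by simp
    thus ?thesis using ij d N_def by (intro exI[of _ j] exI[of _ i]) (auto simp: dist_commute)
  qed
qed

lemma part2:
  fixes A :: "'a::metric_space set"
  assumes ne: "A \<noteq> {}" and g: "II_modulus A \<gamma>"
  shows "I_modulus A (\<lambda>k. \<gamma> k - 1)"
  unfolding I_modulus_def
proof (rule allI, rule ccontr)
  fix k
  define r where "r = 1 / (real k + 1)"
  assume "\<not> (\<exists>a::nat \<Rightarrow> 'a. \<forall>x\<in>A. \<exists>i\<le>\<gamma> k - 1. dist x (a i) \<le> 1 / (real k + 1))"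
  hence H: "\<forall>a::nat\<Rightarrow>'a. \<exists>x\<in>A. \<forall>i\<le>\<gamma> k - 1. dist x (a i) > r"
    unfolding r_def by (metis not_le)
  obtain x0 where x0: "x0 \<in> A" using ne by auto
  have "n \<le> \<gamma> k \<Longrightarrow> \<exists>s. (\<forall>i. s i \<in> A) \<and> (\<forall>i j. i < j \<and> j \<le> n \<longrightarrow> dist (s i) (s j) > r)" for n
  proof (induction n)
    case 0 thus ?case using x0 by (intro exI[of _ "\<lambda>_. x0"]) auto
  next
    case (Suc n)
    then obtain s where s: "\<forall>i. s i \<in> A" "\<forall>i j. i < j \<and> j \<le> n \<longrightarrow> dist (s i) (s j) > r" by auto
    obtain y where y: "y \<in> A" "\<forall>i\<le>\<gamma> k - 1. dist y (s i) > r" using H by blast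
    show ?case
    proof (intro exI[of _ "s(Suc n := y)"] conjI allI impI)
      show "(s(Suc n := y)) i \<in> A" for i using s y by auto
      fix i j assume "i < j \<and> j \<le> Suc n"
      thus "dist ((s(Suc n := y)) i) ((s(Suc n := y)) j) > r"
        using s y Suc.prems by (cases "j = Suc n") (auto simp: dist_commute)
    qed
  qed
  then obtain s where s: "\<forall>i. s i \<in> A" "\<forall>i j. i < j \<and> j \<le> \<gamma> k \<longrightarrow> dist (s i) (s j) > r" by blast
  from g s(1) obtain i j where "i < j" "j \<le> \<gamma> k" "dist (s i) (s j) \<le> r"
    unfolding II_modulus_def r_def by blast
  with s(2) show False by force
qed

lemma tb:
  fixes A :: "'a::metric_space set"
  assumes "I_modulus A \<alpha>"
  shows "totally_bounded A"
  unfolding totally_bounded_metric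
proof (intro allI impI)
  fix e :: real assume e: "e > 0"
  obtain k :: nat where k: "1 / (real k + 1) < e"
  proof -
    obtain k :: nat where "1 / e < real k" using reals_Archimedean2 by blast
    hence "1 / (real k + 1) < e" using e by (simp add: field_simps)
    thus ?thesis using that by blast
  qed
  obtain a where a: "\<forall>x\<in>A. \<exists>i\<le>\<alpha> k. dist x (a i) \<le> 1 / (real k + 1)"
    using assms unfolding I_modulus_def by blast
  show "\<exists>K. finite K \<and> A \<subseteq> (\<Union>x\<in>K. {y. dist x y < e})"
  proof (intro exI[of _ "a ` {..\<alpha> k}"] conjI)
    show "A \<subseteq> (\<Union>x\<in>a ` {..\<alpha> k}. {y. dist x y < e})"
    proof
      fix x assume "x \<in> A"
      then obtain i where "i \<le> \<alpha> k" "dist x (a i) \<le> 1 / (real k + 1)" using a by blast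
      thus "x \<in> (\<Union>x\<in>a ` {..\<alpha> k}. {y. dist x y < e})" using k by (force simp: dist_commute)
    qed
  qed auto
qed

theorem proposition2p4:
  fixes A :: "'a::metric_space set"
  assumes "A \<noteq> {}"
  shows "(\<forall>\<alpha>. I_modulus A \<alpha> \<longrightarrow> II_modulus A (\<lambda>k. \<alpha> (2 * k + 1) + 1))
       \<and> (\<forall>\<gamma>. II_modulus A \<gamma> \<longrightarrow> I_modulus A (\<lambda>k. \<gamma> k - 1) \<and> totally_bounded A)"
  using part1 part2[OF assms] tb by blast

end
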